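(* Let $S$ be a non-empty poset and $(\mathcal{L},\rightharpoonup)=(L,\wedge,\vee,0,1)$ a complete lattice with an $S$-action. (1) $Spec^c(\mathcal{L})=Spec^s(\mathcal{L}^0)$. (2) $Spec^c(\mathcal{L}^0)=Spec^s(\mathcal{L}^* )$. (3) If $x\in L\setminus\{1\}$ is prime, then $Spec^f(\mathcal{L}/x)=(L/x)\setminus\{x/x\}$. (4) Assume additionally that $s\rightharpoonup(y\vee z)=(s\rightharpoonup y)\vee(s\rightharpoonup z)$ for all $s\in S$, $y,z\in L$. Then $x\in L\setminus\{1\}$ is prime if and only if $Spec^f(\mathcal{L}/x)=(L/x)\setminus\{x/x\}$.
   Context: An $S$-action on a lattice $(L,\wedge,\vee)$ is a map $\rightharpoonup:S\times L\to L$ such that $s_1\leq s_2\Rightarrow s_1\rightharpoonup x\leq s_2\rightharpoonup x$; $x\leq y\Rightarrow s\rightharpoonup x\leq s\rightharpoonup y$; and $s\rightharpoonup x\leq x$. For a bounded lattice $\mathcal{L}$ with $S$-action, the dual lattice $\mathcal{L}^0=(L,\vee,\wedge,1,0)$ (order reversed, bottom $1$, top $0$) carries the action of the dual poset $S^0=(S,\geq)$ given by $s\rightharpoonup^0 x=(s\rightharpoonup 1)\vee x$; $\mathcal{L}^*$ denotes $\mathcal{L}$ with the $S$-action $s\rightharpoonup^* x=(s\rightharpoonup 1)\wedge x$. For a bounded lattice with action (bottom $0$, top $1$): an element $x\neq 1$ is prime iff for all $y\in L$, $s\in S$: $s\rightharpoonup y\leq x$ implies $s\rightharpoonup 1\leq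 x$ or $y\leq x$; $x\neq 1$ is coprime iff for all $s\in S$: $s\rightharpoonup 1\leq x$ or $(s\rightharpoonup 1)\vee x=1$; $x\neq 0$ is second iff for all $s$: $s\rightharpoonup x=x$ or $s\rightharpoonup x=0$; $x\neq 0$ is first iff for all $y\in L$, $s\in S$: if $s\rightharpoonup y=0$ and $y\leq x$ then $s\rightharpoonup x=0$ or $y=0$. $Spec^c$, $Spec^s$, $Spec^f$ denote the sets of coprime, second, first elements respectively (computed with respect to the lattice's own order, bounds and action). Quotient lattice: for $x\in L$ and $y,z\geq x$, set $y\sim z$ iff for every $y'\leq y$ there is $z'\leq z$ with $y'\vee x=z'\vee x$ and for every $z'\leq z$ there is $y'\leq y$ with $y'\vee x=z'\vee x$; $y/x$ is the class of $y$, $L/x=\{y/x: y\geq x\}$, ordered by $y/x\leq^q z/x$ iff for every $y'\leq y$ there is $z'\leq z$ with $y'\vee x=z'\vee x$, with $y/x\wedge^q z/x=(y\wedge z)/x$, $y/x\vee^q z/x=(y\vee z)/x$; its bottom is $x/x$ and top $1/x$. $\mathcal{L}/x$ carries the $S$-action $s\rightharpoonup^q y/x=((s\rightharpoonup y)\vee x)/x$. *)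

theory Defs
  imports Main
begin

definition S_action :: "('b::order \<Rightarrow> 'a::lattice \<Rightarrow> 'a) \<Rightarrow> bool" where
  "S_action act \<longleftrightarrow>
     (\<forall>s1 s2 x. s1 \<le> s2 \<longrightarrow> act s1 x \<le> act s2 x) \<and>
     (\<forall>s x y. x \<le> y \<longrightarrow> act s x \<le> act s y) \<and>
     (\<forall>s x. act s x \<le> x)"

text \<open>Generic notions for a bounded lattice with action, given by carrier C,
  order le, join sup, bottom bot, tp tp and action act (s ranges over all of S).\<close>

definition is_prime_gen ::
  "'c set \<Rightarrow> ('c \<Rightarrow> 'c \<Rightarrow> bool) \<Rightarrow> 'c \<Rightarrow> ('b \<Rightarrow> 'c \<Rightarrow> 'c) \<Rightarrow> 'c \<Rightarrow> bool" where
  "is_prime_gen C le tp act x \<longleftrightarrow> x \<in> C \<and> x \<noteq> tp \<and>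
     (\<forall>y\<in>C. \<forall>s. le (act s y) x \<longrightarrow> le (act s tp) x \<or> le y x)"

definition Spec_c ::
  "'c set \<Rightarrow> ('c \<Rightarrow> 'c \<Rightarrow> bool) \<Rightarrow> ('c \<Rightarrow> 'c \<Rightarrow> 'c) \<Rightarrow> 'c \<Rightarrow> ('b \<Rightarrow> 'c \<Rightarrow> 'c) \<Rightarrow> 'c set" where
  "Spec_c C le jn tp act = {x \<in> C. x \<noteq> tp \<and>
     (\<forall>s. le (act s tp) x \<or> jn (act s tp) x = tp)}"

definition Spec_s :: "'c set \<Rightarrow> 'c \<Rightarrow> ('b \<Rightarrow> 'c \<Rightarrow> 'c) \<Rightarrow> 'c set" where
  "Spec_s C bt act = {x \<in> C. x \<noteq> bt \<and> (\<forall>s. act s x = x \<or> act s x = bt)}"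

definition Spec_f ::
  "'c set \<Rightarrow> ('c \<Rightarrow> 'c \<Rightarrow> bool) \<Rightarrow> 'c \<Rightarrow> ('b \<Rightarrow> 'c \<Rightarrow> 'c) \<Rightarrow> 'c set" where
  "Spec_f C le bt act = {x \<in> C. x \<noteq> bt \<and>
     (\<forall>y\<in>C. \<forall>s. act s y = bt \<and> le y x \<longrightarrow> act s x = bt \<or> y = bt)}"

text \<open>Dual action on L^0 and the action of L^*.\<close>
definition dual_act :: "('b \<Rightarrow> 'a::bounded_lattice \<Rightarrow> 'a) \<Rightarrow> 'b \<Rightarrow> 'a \<Rightarrow> 'a" where
  "dual_act act s x = sup (act s top) x"

definition star_act :: "('b \<Rightarrow> 'a::bounded_lattice \<Rightarrow> 'a) \<Rightarrow> 'b \<Rightarrow> 'a \<Rightarrow> 'a" where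
  "star_act act s x = inf (act s top) x"

text \<open>Quotient lattice L/x; elements are equivalence classes (sets).\<close>
definition qle :: "'a::lattice \<Rightarrow> 'a \<Rightarrow> 'a \<Rightarrow> bool" where
  "qle x y z \<longleftrightarrow> (\<forall>y'. y' \<le> y \<longrightarrow> (\<exists>z'. z' \<le> z \<and> sup y' x = sup z' x))"

definition qequiv :: "'a::lattice \<Rightarrow> 'a \<Rightarrow> 'a \<Rightarrow> bool" where
  "qequiv x y z \<longleftrightarrow> qle x y z \<and> qle x z y"

definition qclass :: "'a::lattice \<Rightarrow> 'a \<Rightarrow> 'a set" where
  "qclass x y = {z. x \<le> z \<and> qequiv x y z}"

definition quot_carrier :: "'a::lattice \<Rightarrow> 'a set set" where
  "quot_carrier x = {qclass x y | y. x \<le> y}"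

definition quot_le :: "'a::lattice \<Rightarrow> 'a set \<Rightarrow> 'a set \<Rightarrow> bool" where
  "quot_le x A B \<longleftrightarrow> (\<exists>y z. x \<le> y \<and> x \<le> z \<and> A = qclass x y \<and> B = qclass x z \<and> qle x y z)"

definition qrep :: "'a::lattice \<Rightarrow> 'a set \<Rightarrow> 'a" where
  "qrep x A = (SOME y. x \<le> y \<and> A = qclass x y)"

definition quot_act :: "('b \<Rightarrow> 'a::lattice \<Rightarrow> 'a) \<Rightarrow> 'a \<Rightarrow> 'b \<Rightarrow> 'a set \<Rightarrow> 'a set" where
  "quot_act act x s A = qclass x (sup (act s (qrep x A)) x)"

end

theory Submission
  imports Defs
begin

lemma qle_iff:
  fixes x y z :: "'a::lattice"
  assumes "x \<le> y" "x \<le> z"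
  shows "qle x y z \<longleftrightarrow> y \<le> z"
proof
  assume "qle x y z"
  then obtain z' where "z' \<le> z" "sup y x = sup z' x" unfolding qle_def by blast
  then show "y \<le> z" using assms by (metis le_sup_iff sup.absorb1 sup.cobounded1 order_trans)
next
  assume "y \<le> z"
  show "qle x y z" unfolding qle_def
  proof (intro allI impI)
    fix y' assume "y' \<le> y"
    then show "\<exists>z'. z' \<le> z \<and> sup y' x = sup z' x"
      using assms \<open>y \<le> z\<close> by (intro exI[of _ "sup y' x"]) (auto simp: sup_assoc)
  qed
qed

lemma qclass_eq:
  fixes x y :: "'a::lattice"
  assumes "x \<le> y"
  shows "qclass x y = {y}"
  using assms unfolding qclass_def qequiv_def
  by (auto simp: qle_iff)

lemma quot_carrier_eq: "quot_carrier (x::'a::lattice) = {{y} | y. x \<le> y}"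
  unfolding quot_carrier_def by (auto simp: qclass_eq) (metis qclass_eq)

lemma qrep_eq:
  fixes x y :: "'a::lattice"
  assumes "x \<le> y"
  shows "qrep x {y} = y"
proof -
  have "x \<le> y \<and> {y} = qclass x y" using assms qclass_eq by auto
  then have "x \<le> qrep x {y} \<and> {y} = qclass x (qrep x {y})"
    unfolding qrep_def by (rule someI)
  then show ?thesis using qclass_eq by fastforce
qed

lemma quot_le_eq:
  fixes x y z :: "'a::lattice"
  assumes "x \<le> y" "x \<le> z"
  shows "quot_le x {y} {z} \<longleftrightarrow> y \<le> z"
proof
  assume "quot_le x {y} {z}"
  then show "y \<le> z" unfolding quot_le_def by (auto simp: qclass_eq qle_iff)
next
  assume "y \<le> z"
  then show "quot_le x {y} {z}" unfolding quot_le_def using assms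
    by (intro exI[of _ y] exI[of _ z]) (simp add: qclass_eq qle_iff)
qed

lemma quot_act_eq:
  fixes x y :: "'a::lattice"
  assumes "x \<le> y"
  shows "quot_act act x s {y} = {sup (act s y) x}"
  using assms unfolding quot_act_def by (simp add: qrep_eq qclass_eq)

lemma Spec_f_quot:
  fixes x :: "'a::lattice"
  shows "Spec_f (quot_carrier x) (quot_le x) (qclass x x) (quot_act act x)
   = {{y} | y. x \<le> y \<and> y \<noteq> x \<and>
        (\<forall>z s. x \<le> z \<longrightarrow> z \<le> y \<longrightarrow> act s z \<le> x \<longrightarrow> act s y \<le> x \<or> z = x)}"
  (is "?L = ?R")
proof
  show "?L \<subseteq> ?R"
  proof
    fix A assume A: "A \<in> ?L"
    then obtain y where y: "A = {y}" "x \<le> y" unfolding Spec_f_def quot_carrier_eq by auto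
    have "\<forall>z s. x \<le> z \<longrightarrow> z \<le> y \<longrightarrow> act s z \<le> x \<longrightarrow> act s y \<le> x \<or> z = x"
    proof (intro allI impI)
      fix z s assume z: "x \<le> z" "z \<le> y" "act s z \<le> x"
      have "{z} \<in> quot_carrier x" using z quot_carrier_eq by blast
      then have "quot_act act x s {z} = qclass x x \<and> quot_le x {z} A \<longrightarrow>
          quot_act act x s A = qclass x x \<or> {z} = qclass x x"
        using A unfolding Spec_f_def by blast
      then show "act s y \<le> x \<or> z = x"
        using z y by (simp add: quot_act_eq qclass_eq quot_le_eq sup.absorb2)
          (metis sup.orderI sup_commute)
    qed
    then show "A \<in> ?R" using A y unfolding Spec_f_def by (auto simp: qclass_eq)
  qed
next
  show "?R \<subseteq> ?L"
  proof
    fix A assume "A \<in> ?R"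
    then obtain y where y: "A = {y}" "x \<le> y" "y \<noteq> x"
      and H: "\<forall>z s. x \<le> z \<longrightarrow> z \<le> y \<longrightarrow> act s z \<le> x \<longrightarrow> act s y \<le> x \<or> z = x" by blast
    have C: "\<forall>B\<in>{{y} |y. x \<le> y}. \<forall>s. quot_act act x s B = qclass x x \<and> quot_le x B A \<longrightarrow>
          quot_act act x s A = qclass x x \<or> B = qclass x x"
    proof (intro ballI allI impI)
      fix B s assume B: "B \<in> {{y} |y. x \<le> y}"
        and h: "quot_act act x s B = qclass x x \<and> quot_le x B A"
      then obtain z where z: "B = {z}" "x \<le> z" by blast
      have "act s z \<le> x" "z \<le> y" using h z y
        by (auto simp: quot_act_eq qclass_eq quot_le_eq) (metis sup.orderI sup_commute)
      then have "act s y \<le> x \<or> z = x" using H z by blast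
      then show "quot_act act x s A = qclass x x \<or> B = qclass x x"
        using y z by (auto simp: quot_act_eq qclass_eq sup.absorb2)
    qed
    have "A \<in> {{y} |y. x \<le> y}" "A \<noteq> qclass x x" using y by (auto simp: qclass_eq)
    then show "A \<in> ?L" using C unfolding Spec_f_def quot_carrier_eq by blast
  qed
qed

lemma P1_lem: fixes act :: "'b::order \<Rightarrow> 'a::complete_lattice \<Rightarrow> 'a"
  shows "Spec_c UNIV (\<le>) sup top act = Spec_s UNIV top (dual_act act)"
  proof -
    have e: "\<And>s x. (act s top \<le> x) = (sup (act s top) x = x)"
      by (rule sup.absorb_iff2)
    show ?thesis unfolding Spec_c_def Spec_s_def dual_act_def
      apply (rule Collect_cong)
      apply (simp only: e)
      done
  qed

lemma P2_lem: fixes act :: "'b::order \<Rightarrow> 'a::complete_lattice \<Rightarrow> 'a"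
  shows "Spec_c UNIV (\<ge>) inf bot (dual_act act) = Spec_s UNIV bot (star_act act)"
  proof -
    have e: "\<And>s x. (x \<le> act s top) = (inf (act s top) x = x)"
      by (rule inf.absorb_iff2)
    show ?thesis unfolding Spec_c_def Spec_s_def dual_act_def star_act_def sup_bot_right
      apply (rule Collect_cong)
      apply (simp only: e)
      done
  qed

theorem mainTheorem7:
  fixes act :: "'b::order \<Rightarrow> 'a::complete_lattice \<Rightarrow> 'a"
  assumes "S_action act"
  shows
    "Spec_c UNIV (\<le>) sup top act = Spec_s UNIV top (dual_act act)
     \<and> Spec_c UNIV (\<ge>) inf bot (dual_act act) = Spec_s UNIV bot (star_act act)
     \<and> (\<forall>x. is_prime_gen UNIV (\<le>) top act x \<longrightarrow>
          Spec_f (quot_carrier x) (quot_le x) (qclass x x) (quot_act act x)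
            = quot_carrier x - {qclass x x})
     \<and> ((\<forall>s y z. act s (sup y z) = sup (act s y) (act s z)) \<longrightarrow>
          (\<forall>x. x \<noteq> top \<longrightarrow>
            (is_prime_gen UNIV (\<le>) top act x \<longleftrightarrow>
              Spec_f (quot_carrier x) (quot_le x) (qclass x x) (quot_act act x)
                = quot_carrier x - {qclass x x})))"
proof -
  have mono: "\<And>s a b. a \<le> b \<Longrightarrow> act s a \<le> act s b"
    and defl: "\<And>s a. act s a \<le> a" using assms unfolding S_action_def by auto
  have carr: "\<And>x::'a. quot_carrier x - {qclass x x} = {{y} | y. x \<le> y \<and> y \<noteq> x}"
    by (auto simp: quot_carrier_eq qclass_eq)
  note P1 = P1_lem[of act]
  note P2 = P2_lem[of act]
  have P3: "Spec_f (quot_carrier x) (quot_le x) (qclass x x) (quot_act act x)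
            = quot_carrier x - {qclass x x}" if pr: "is_prime_gen UNIV (\<le>) top act x" for x :: 'a
  proof -
    have "\<forall>z s. x \<le> z \<longrightarrow> z \<le> y \<longrightarrow> act s z \<le> x \<longrightarrow> act s y \<le> x \<or> z = x" for y
    proof (intro allI impI)
      fix z s assume z: "x \<le> z" "z \<le> y" "act s z \<le> x"
      have "act s top \<le> x \<or> z \<le> x" using pr z(3) unfolding is_prime_gen_def by blast
      moreover have "act s y \<le> act s top" by (rule mono) simp
      ultimately show "act s y \<le> x \<or> z = x" using z(1) by (meson antisym order_trans)
    qed
    then show ?thesis unfolding Spec_f_quot carr by blast
  qed
  have P4: "is_prime_gen UNIV (\<le>) top act x" if
    d: "\<forall>s y z. act s (sup y z) = sup (act s y) (act s z)" and nt: "x \<noteq> top"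
    and eq: "Spec_f (quot_carrier x) (quot_le x) (qclass x x) (quot_act act x)
                = quot_carrier x - {qclass x x}" for x :: 'a
  proof -
    have "{top} \<in> {{y} | y. x \<le> y \<and> y \<noteq> x}" using nt by auto
    then have "{top} \<in> {{y} | y. x \<le> y \<and> y \<noteq> x \<and>
        (\<forall>z s. x \<le> z \<longrightarrow> z \<le> y \<longrightarrow> act s z \<le> x \<longrightarrow> act s y \<le> x \<or> z = x)}"
      using eq unfolding Spec_f_quot carr by simp
    then have H: "\<forall>z s. x \<le> z \<longrightarrow> act s z \<le> x \<longrightarrow> act s top \<le> x \<or> z = x" by auto
    show ?thesis unfolding is_prime_gen_def
    proof (intro conjI ballI allI impI)
      fix y s assume "act s y \<le> x"
      then have "act s (sup y x) \<le> x" using d defl by (simp add: le_supI)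
      then have "act s top \<le> x \<or> sup y x = x" using H by auto
      then show "act s top \<le> x \<or> y \<le> x" by (metis sup.orderI sup_commute)
    qed (use nt in auto)
  qed
  show ?thesis
  proof (intro conjI allI impI)
    show "Spec_c UNIV (\<le>) sup top act = Spec_s UNIV top (dual_act act)" by (rule P1)
    show "Spec_c UNIV (\<ge>) inf bot (dual_act act) = Spec_s UNIV bot (star_act act)" by (rule P2)
  next
    fix x :: 'a assume "is_prime_gen UNIV (\<le>) top act x"
    then show "Spec_f (quot_carrier x) (quot_le x) (qclass x x) (quot_act act x)
            = quot_carrier x - {qclass x x}" by (rule P3)
  next
    fix x :: 'a assume d: "\<forall>s y z. act s (sup y z) = sup (act s y) (act s z)" and nt: "x \<noteq> top"
    show "is_prime_gen UNIV (\<le>) top act x \<longleftrightarrow>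
              Spec_f (quot_carrier x) (quot_le x) (qclass x x) (quot_act act x)
                = quot_carrier x - {qclass x x}"
    proof
      assume "is_prime_gen UNIV (\<le>) top act x"
      then show "Spec_f (quot_carrier x) (quot_le x) (qclass x x) (quot_act act x)
                = quot_carrier x - {qclass x x}" by (rule P3)
    next
      assume "Spec_f (quot_carrier x) (quot_le x) (qclass x x) (quot_act act x)
                = quot_carrier x - {qclass x x}"
      then show "is_prime_gen UNIV (\<le>) top act x" using P4 d nt by blast
    qed
  qed
qed

end
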